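(* Let $S_{d,n}(x_1,\dots,x_n)=\sum_{1\le i_1\le\cdots\le i_d\le n}x_{i_1}\cdots x_{i_d}$ (complete homogeneous symmetric polynomial; $S_{0,n}=1$). For all $n\ge2$ and $d\ge1$, in the field of rational functions $\mathbb Q(x_1,\dots,x_n)$, $$S_{d,n}=\sum\frac{(-1)^{\alpha(i_2,\dots,i_n)+n}}{(x_2-x_{i_2})(x_3-x_{i_3})\cdots(x_n-x_{i_n})}\,(x_n^{d+n-1}-x_{i_n}^{d+n-1}),$$ the sum running over the $2^{n-2}$ tuples $(i_2,\dots,i_n)$ with $i_2=1$ and $i_{j+1}\in\{j,i_j\}$ for $2\le j\le n-1$, where $\alpha(i_2,\dots,i_n)$ is the number of $j$ with $2\le j\le n-1$ and $i_{j+1}\ne i_j$. *)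

theory Defs
  imports Complex_Main "HOL-Library.FuncSet"
begin

definition hsym :: "nat \<Rightarrow> nat \<Rightarrow> (nat \<Rightarrow> 'a::comm_ring_1) \<Rightarrow> 'a" where
  "hsym d n x = (\<Sum>f \<in> {f \<in> {1..d} \<rightarrow>\<^sub>E {1..n}. mono_on {1..d} f}. \<Prod>k=1..d. x (f k))"

definition tuples :: "nat \<Rightarrow> (nat \<Rightarrow> nat) set" where
  "tuples n = {i \<in> {2..n} \<rightarrow>\<^sub>E {1..n}. i 2 = 1 \<and>
      (\<forall>j \<in> {2..n-1}. i (j+1) = j \<or> i (j+1) = i j)}"

definition alpha :: "nat \<Rightarrow> (nat \<Rightarrow> nat) \<Rightarrow> nat" where
  "alpha n i = card {j \<in> {2..n-1}. i (j+1) \<noteq> i j}"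

end

theory Submission
  imports Defs
begin

fun g :: "nat \<Rightarrow> rat list \<Rightarrow> rat" where
  "g 0 L = 1"
| "g (Suc d) [] = 0"
| "g (Suc d) (y # L) = g (Suc d) L + y * g d (y # L)"

lemma g_single: "g e [p] = p ^ e"
  by (induction e) auto

lemma g_two: "g (Suc e) [p] - g (Suc e) [q] = (p - q) * g e [q, p]"
proof (induction e)
  case 0
  then show ?case by simp
next
  case (Suc e)
  have e: "g (Suc e) [q, p] = p ^ Suc e + q * g e [q, p]" by (simp add: g_single)
  have IH: "p ^ Suc e - q ^ Suc e = (p - q) * g e [q, p]" using Suc by (simp add: g_single)
  have "(p - q) * g (Suc e) [q, p] = (p - q) * p ^ Suc e + q * ((p - q) * g e [q, p])"
    unfolding e by (simp add: algebra_simps)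
  also have "\<dots> = p ^ Suc (Suc e) - q ^ Suc (Suc e)" unfolding IH[symmetric] by (simp add: algebra_simps)
  finally show ?case by (simp add: g_single)
qed

lemma g_end: "g (Suc e) (L @ [p]) - g (Suc e) (L @ [q]) = (p - q) * g e (L @ [q, p])"
proof (induction L arbitrary: e)
  case Nil
  then show ?case using g_two by simp
next
  case (Cons y L)
  show ?case
  proof (induction e)
    case 0
    then show ?case using Cons[of 0] by simp
  next
    case (Suc e)
    have "g (Suc (Suc e)) ((y # L) @ [p]) - g (Suc (Suc e)) ((y # L) @ [q])
       = (g (Suc (Suc e)) (L @ [p]) - g (Suc (Suc e)) (L @ [q]))
         + y * (g (Suc e) ((y # L) @ [p]) - g (Suc e) ((y # L) @ [q]))"
      by (simp add: algebra_simps)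
    also have "\<dots> = (p - q) * g (Suc e) (L @ [q, p]) + y * ((p - q) * g e ((y # L) @ [q, p]))"
      using Cons[of "Suc e"] Suc by simp
    also have "\<dots> = (p - q) * g (Suc e) ((y # L) @ [q, p])"
      by (simp add: algebra_simps)
    finally show ?case .
  qed
qed

definition MM :: "nat \<Rightarrow> nat \<Rightarrow> (nat \<Rightarrow> nat) set" where
  "MM d n = {f \<in> {1..d} \<rightarrow>\<^sub>E {1..n}. mono_on {1..d} f}"

lemma hsym_MM: "hsym d n x = (\<Sum>f \<in> MM d n. \<Prod>k=1..d. x (f k))"
  unfolding hsym_def MM_def by simp

lemma hsym_0: "hsym 0 n x = 1"
  unfolding hsym_def by (simp add: mono_on_def monotone_on_def)

lemma hsym_Suc_0: "hsym (Suc d) 0 x = 0"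
proof -
  have "{1..Suc d} \<rightarrow>\<^sub>E {1..0::nat} = {}" unfolding PiE_eq_empty_iff by (rule bexI[of _ 1]) auto
  then show ?thesis unfolding hsym_def by simp
qed

lemma MM_split: "MM (Suc d) (Suc n) = MM (Suc d) n \<union> (\<lambda>f. f(Suc d := Suc n)) ` MM d (Suc n)"
proof
  show "MM (Suc d) (Suc n) \<subseteq> MM (Suc d) n \<union> (\<lambda>f. f(Suc d := Suc n)) ` MM d (Suc n)"
  proof
    fix f assume f: "f \<in> MM (Suc d) (Suc n)"
    hence fP: "f \<in> {1..Suc d} \<rightarrow>\<^sub>E {1..Suc n}" and fm: "\<And>r s. r \<in> {1..Suc d} \<Longrightarrow> s \<in> {1..Suc d} \<Longrightarrow> r \<le> s \<Longrightarrow> f r \<le> f s"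
      unfolding MM_def mono_on_def monotone_on_def by auto
    show "f \<in> MM (Suc d) n \<union> (\<lambda>f. f(Suc d := Suc n)) ` MM d (Suc n)"
    proof (cases "f (Suc d) \<le> n")
      case True
      have "f \<in> {1..Suc d} \<rightarrow>\<^sub>E {1..n}"
        using fP fm[of _ "Suc d"] True by (auto simp: PiE_iff) (meson atLeastAtMost_iff le_trans)
      then show ?thesis using f unfolding MM_def by auto
    next
      case False
      have "f (Suc d) \<in> {1..Suc n}" using fP by auto
      hence fs: "f (Suc d) = Suc n" using False by auto
      let ?h = "f(Suc d := undefined)"
      have h1: "?h \<in> {1..d} \<rightarrow>\<^sub>E {1..Suc n}" using fP by (auto simp: PiE_iff extensional_def)
      have h2: "mono_on {1..d} ?h" unfolding mono_on_def monotone_on_def using fm by auto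
      have "?h \<in> MM d (Suc n)" unfolding MM_def using h1 h2 by blast
      moreover have "f = ?h(Suc d := Suc n)" using fs by auto
      ultimately show ?thesis by blast
    qed
  qed
next
  show "MM (Suc d) n \<union> (\<lambda>f. f(Suc d := Suc n)) ` MM d (Suc n) \<subseteq> MM (Suc d) (Suc n)"
  proof
    fix f assume "f \<in> MM (Suc d) n \<union> (\<lambda>f. f(Suc d := Suc n)) ` MM d (Suc n)"
    then show "f \<in> MM (Suc d) (Suc n)"
    proof
      assume "f \<in> MM (Suc d) n"
      then show ?thesis unfolding MM_def by (auto simp: PiE_iff)
    next
      assume "f \<in> (\<lambda>f. f(Suc d := Suc n)) ` MM d (Suc n)"
      then obtain h where h: "h \<in> MM d (Suc n)" and fh: "f = h(Suc d := Suc n)" by blast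
      hence hP: "h \<in> {1..d} \<rightarrow>\<^sub>E {1..Suc n}" and hm: "\<And>r s. r \<in> {1..d} \<Longrightarrow> s \<in> {1..d} \<Longrightarrow> r \<le> s \<Longrightarrow> h r \<le> h s"
        unfolding MM_def mono_on_def monotone_on_def by auto
      have "f \<in> {1..Suc d} \<rightarrow>\<^sub>E {1..Suc n}" using hP fh by (auto simp: PiE_iff extensional_def)
      moreover have "mono_on {1..Suc d} f"
        unfolding mono_on_def monotone_on_def
      proof (intro ballI impI)
        fix r s assume rs0: "r \<in> {1..Suc d}" "s \<in> {1..Suc d}" "r \<le> s"
        hence rs: "r \<in> {1..Suc d} \<and> s \<in> {1..Suc d} \<and> r \<le> s" by blast
        show "f r \<le> f s"
        proof (cases "s = Suc d")
          case True
          then show ?thesis using fh hP rs by (auto simp: PiE_iff)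
        next
          case False
          then show ?thesis using fh hm rs by auto
        qed
      qed
      ultimately show ?thesis unfolding MM_def by auto
    qed
  qed
qed

lemma hsym_SS: "hsym (Suc d) (Suc n) x = hsym (Suc d) n x + x (Suc n) * hsym d (Suc n) x"
proof -
  have fin: "finite (MM d n)" for d n unfolding MM_def
    by (rule finite_subset[of _ "{1..d} \<rightarrow>\<^sub>E {1..n}"]) (auto intro: finite_PiE)
  have disj: "MM (Suc d) n \<inter> (\<lambda>f. f(Suc d := Suc n)) ` MM d (Suc n) = {}"
  proof (rule ccontr)
    assume "MM (Suc d) n \<inter> (\<lambda>f. f(Suc d := Suc n)) ` MM d (Suc n) \<noteq> {}"
    then obtain h where "h(Suc d := Suc n) \<in> MM (Suc d) n" by blast
    hence "h(Suc d := Suc n) \<in> {1..Suc d} \<rightarrow>\<^sub>E {1..n}" unfolding MM_def by simp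
    hence "(h(Suc d := Suc n)) (Suc d) \<in> {1..n}" by (rule PiE_mem) simp
    then show False by simp
  qed
  have inj: "inj_on (\<lambda>f. f(Suc d := Suc n)) (MM d (Suc n))"
  proof (rule inj_onI)
    fix f h assume f: "f \<in> MM d (Suc n)" and h: "h \<in> MM d (Suc n)" and e: "f(Suc d := Suc n) = h(Suc d := Suc n)"
    have "f (Suc d) = undefined" "h (Suc d) = undefined" using f h unfolding MM_def by (auto simp: PiE_iff extensional_def)
    then show "f = h" using e by (metis fun_upd_triv fun_upd_upd)
  qed
  have "hsym (Suc d) (Suc n) x = hsym (Suc d) n x
      + (\<Sum>f \<in> MM d (Suc n). \<Prod>k=1..Suc d. x ((f(Suc d := Suc n)) k))"
    unfolding hsym_MM MM_split
    using sum.union_disjoint[OF fin finite_imageI[OF fin] disj, of "\<lambda>f. \<Prod>k=1..Suc d. x (f k)"]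
      sum.reindex[OF inj, of "\<lambda>f. \<Prod>k=1..Suc d. x (f k)"] by (simp only: o_def)
  also have "(\<Sum>f \<in> MM d (Suc n). \<Prod>k=1..Suc d. x ((f(Suc d := Suc n)) k))
      = (\<Sum>f \<in> MM d (Suc n). x (Suc n) * (\<Prod>k=1..d. x (f k)))"
  proof (rule sum.cong)
    fix f assume "f \<in> MM d (Suc n)"
    have "(\<Prod>k=1..Suc d. x ((f(Suc d := Suc n)) k)) = (\<Prod>k=1..d. x ((f(Suc d := Suc n)) k)) * x (Suc n)"
      by (simp add: prod.cl_ivl_Suc)
    also have "(\<Prod>k=1..d. x ((f(Suc d := Suc n)) k)) = (\<Prod>k=1..d. x (f k))"
      by (rule prod.cong) auto
    finally show "(\<Prod>k=1..Suc d. x ((f(Suc d := Suc n)) k)) = x (Suc n) * (\<Prod>k=1..d. x (f k))"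
      by simp
  qed simp
  finally show ?thesis by (simp add: hsym_MM sum_distrib_left)
qed

lemma hsym_g: "hsym d n x = g d (map x (rev [1..<n+1]))"
proof (induction n arbitrary: d)
  case 0
  then show ?case by (cases d) (auto simp: hsym_0 hsym_Suc_0)
next
  case (Suc n)
  note outer = Suc.IH
  show ?case
  proof (induction d)
    case 0
    then show ?case by (simp add: hsym_0)
  next
    case (Suc d)
    have r: "map x (rev [1..<Suc n + 1]) = x (Suc n) # map x (rev [1..<n+1])" by simp
    show ?case unfolding hsym_SS outer Suc r by simp
  qed
qed


definition TT :: "nat \<Rightarrow> nat \<Rightarrow> nat \<Rightarrow> (nat \<Rightarrow> nat) set" where
  "TT n k a = {i \<in> {k..n} \<rightarrow>\<^sub>E {1..n}. i k = a \<and> (\<forall>j \<in> {k..n-1}. i (j+1) = j \<or> i (j+1) = i j)}"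

definition al :: "nat \<Rightarrow> nat \<Rightarrow> (nat \<Rightarrow> nat) \<Rightarrow> nat" where
  "al n k i = card {j \<in> {k..n-1}. i (j+1) \<noteq> i j}"

definition WW :: "nat \<Rightarrow> nat \<Rightarrow> (nat \<Rightarrow> rat) \<Rightarrow> nat \<Rightarrow> nat \<Rightarrow> rat" where
  "WW n m x k a = (\<Sum>i \<in> TT n k a. (-1) ^ (al n k i) / (\<Prod>j=k..n. (x j - x (i j))) * (x n ^ m - x (i n) ^ m))"

lemma TT_fin: "finite (TT n k a)"
  unfolding TT_def by (rule finite_subset[of _ "{k..n} \<rightarrow>\<^sub>E {1..n}"]) (auto intro: finite_PiE)

lemma TT_base: assumes "1 \<le> a" "a \<le> n" shows "TT n n a = {(\<lambda>j. if j = n then a else undefined)}"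
proof
  show "TT n n a \<subseteq> {(\<lambda>j. if j = n then a else undefined)}"
  proof
    fix i assume "i \<in> TT n n a"
    hence "i \<in> {n..n} \<rightarrow>\<^sub>E {1..n}" "i n = a" unfolding TT_def by auto
    hence "i = (\<lambda>j. if j = n then a else undefined)"
      by (auto simp: fun_eq_iff PiE_iff extensional_def)
    then show "i \<in> {(\<lambda>j. if j = n then a else undefined)}" by simp
  qed
next
  show "{(\<lambda>j. if j = n then a else undefined)} \<subseteq> TT n n a"
    using assms unfolding TT_def by (auto simp: PiE_iff extensional_def)
qed

lemma TT_step:
  assumes "k < n" "1 \<le> a" "a < k"
  shows "TT n k a = (\<lambda>i. i(k := a)) ` (TT n (Suc k) a \<union> TT n (Suc k) k)"
proof
  show "TT n k a \<subseteq> (\<lambda>i. i(k := a)) ` (TT n (Suc k) a \<union> TT n (Suc k) k)"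
  proof
    fix i assume i: "i \<in> TT n k a"
    hence iP: "i \<in> {k..n} \<rightarrow>\<^sub>E {1..n}" and ik: "i k = a"
      and ic: "\<And>j. j \<in> {k..n-1} \<Longrightarrow> i (j+1) = j \<or> i (j+1) = i j"
      unfolding TT_def by auto
    let ?h = "i(k := undefined)"
    have h1: "?h \<in> {Suc k..n} \<rightarrow>\<^sub>E {1..n}" using iP by (auto simp: PiE_iff extensional_def)
    have h2: "\<forall>j \<in> {Suc k..n-1}. ?h (j+1) = j \<or> ?h (j+1) = ?h j" using ic by auto
    have "i (k+1) = k \<or> i (k+1) = a" using ic[of k] assms ik by auto
    hence "?h \<in> TT n (Suc k) a \<union> TT n (Suc k) k" using h1 h2 assms unfolding TT_def by auto
    moreover have "i = ?h(k := a)" using ik by auto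
    ultimately show "i \<in> (\<lambda>i. i(k := a)) ` (TT n (Suc k) a \<union> TT n (Suc k) k)" by blast
  qed
next
  show "(\<lambda>i. i(k := a)) ` (TT n (Suc k) a \<union> TT n (Suc k) k) \<subseteq> TT n k a"
  proof
    fix i' assume "i' \<in> (\<lambda>i. i(k := a)) ` (TT n (Suc k) a \<union> TT n (Suc k) k)"
    then obtain i c where i: "i \<in> TT n (Suc k) c" and c: "c = a \<or> c = k" and i': "i' = i(k := a)" by blast
    hence iP: "i \<in> {Suc k..n} \<rightarrow>\<^sub>E {1..n}" and ik: "i (Suc k) = c"
      and ic: "\<And>j. j \<in> {Suc k..n-1} \<Longrightarrow> i (j+1) = j \<or> i (j+1) = i j"
      unfolding TT_def by auto
    have h1: "i' \<in> {k..n} \<rightarrow>\<^sub>E {1..n}" using iP i' assms by (auto simp: PiE_iff extensional_def)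
    have h2: "\<forall>j \<in> {k..n-1}. i' (j+1) = j \<or> i' (j+1) = i' j"
    proof
      fix j assume j: "j \<in> {k..n-1}"
      show "i' (j+1) = j \<or> i' (j+1) = i' j"
      proof (cases "j = k")
        case True
        then show ?thesis using i' ik c by auto
      next
        case False
        then show ?thesis using i' ic[of j] j by auto
      qed
    qed
    show "i' \<in> TT n k a" unfolding TT_def using h1 h2 i' by auto
  qed
qed

lemma TT_dom: "i \<in> TT n k a \<Longrightarrow> j \<notin> {k..n} \<Longrightarrow> i j = undefined"
  unfolding TT_def by (auto simp: PiE_iff extensional_def)

lemma TT_first: "i \<in> TT n k a \<Longrightarrow> i k = a"
  unfolding TT_def by auto

lemma al_step:
  assumes "k < n" "i \<in> TT n (Suc k) c"
  shows "al n k (i(k := a)) = al n (Suc k) i + (if c = a then 0 else 1)"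
proof -
  have ic: "i (Suc k) = c" using TT_first[OF assms(2)] .
  have "{j \<in> {k..n-1}. (i(k:=a)) (j+1) \<noteq> (i(k:=a)) j}
      = (if c = a then {} else {k}) \<union> {j \<in> {Suc k..n-1}. i (j+1) \<noteq> i j}"
    using assms ic by (auto split: if_splits)
  moreover have "k \<notin> {j \<in> {Suc k..n-1}. i (j+1) \<noteq> i j}" by auto
  ultimately show ?thesis unfolding al_def by auto
qed

lemma prod_step:
  assumes "k < n" "i \<in> TT n (Suc k) c"
  shows "(\<Prod>j=k..n. (x j - x ((i(k := a)) j))) = (x k - x a) * (\<Prod>j=Suc k..n. (x j - x (i j)))"
proof -
  have "(\<Prod>j=k..n. (x j - x ((i(k := a)) j))) = (x k - x a) * (\<Prod>j=Suc k..n. (x j - x ((i(k := a)) j)))"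
    using assms by (simp add: prod.atLeast_Suc_atMost)
  also have "(\<Prod>j=Suc k..n. (x j - x ((i(k := a)) j))) = (\<Prod>j=Suc k..n. (x j - x (i j)))"
    by (rule prod.cong) auto
  finally show ?thesis .
qed

lemma WW_step:
  assumes "k < n" "1 \<le> a" "a < k" "x k \<noteq> x a"
  shows "WW n m x k a = (WW n m x (Suc k) a - WW n m x (Suc k) k) / (x k - x a)"
proof -
  let ?F = "\<lambda>k i. (-1) ^ (al n k i) / (\<Prod>j=k..n. (x j - x (i j))) * (x n ^ m - x (i n) ^ m) :: rat"
  have disj: "TT n (Suc k) a \<inter> TT n (Suc k) k = {}" 
  proof (rule ccontr)
    assume "TT n (Suc k) a \<inter> TT n (Suc k) k \<noteq> {}"
    then obtain i where "i \<in> TT n (Suc k) a" "i \<in> TT n (Suc k) k" by blast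
    hence "i (Suc k) = a" "i (Suc k) = k" using TT_first by auto
    then show False using assms by simp
  qed
  have inj: "inj_on (\<lambda>i. i(k := a)) (TT n (Suc k) a \<union> TT n (Suc k) k)"
  proof (rule inj_onI)
    fix f h assume f: "f \<in> TT n (Suc k) a \<union> TT n (Suc k) k" and h: "h \<in> TT n (Suc k) a \<union> TT n (Suc k) k"
      and e: "f(k := a) = h(k := a)"
    have "f k = undefined" "h k = undefined" using f h TT_dom[of _ n "Suc k"] by auto
    then show "f = h" using e by (metis fun_upd_triv fun_upd_upd)
  qed
  have trm: "?F k (i(k := a)) = (if c = a then 1 else -1) * ?F (Suc k) i / (x k - x a)"
    if "i \<in> TT n (Suc k) c" for i c
  proof -
    have "(i(k := a)) n = i n" using assms by auto
    then show ?thesis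
      using al_step[OF assms(1) that, of a] prod_step[OF assms(1) that, of x a] by (simp add: power_add)
  qed
  have "WW n m x k a = sum (?F k) ((\<lambda>i. i(k := a)) ` (TT n (Suc k) a \<union> TT n (Suc k) k))"
    unfolding WW_def TT_step[OF assms(1-3)] ..
  also have "\<dots> = sum (\<lambda>i. ?F k (i(k := a))) (TT n (Suc k) a) + sum (\<lambda>i. ?F k (i(k := a))) (TT n (Suc k) k)"
    by (simp add: sum.reindex[OF inj] sum.union_disjoint[OF TT_fin TT_fin disj])
  also have "sum (\<lambda>i. ?F k (i(k := a))) (TT n (Suc k) a) = sum (\<lambda>i. ?F (Suc k) i / (x k - x a)) (TT n (Suc k) a)"
  proof (rule sum.cong)
    fix i assume "i \<in> TT n (Suc k) a"
    from trm[OF this] show "?F k (i(k := a)) = ?F (Suc k) i / (x k - x a)" by simp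
  qed simp
  also have "sum (\<lambda>i. ?F k (i(k := a))) (TT n (Suc k) k) = sum (\<lambda>i. - (?F (Suc k) i / (x k - x a))) (TT n (Suc k) k)"
  proof (rule sum.cong)
    fix i assume "i \<in> TT n (Suc k) k"
    from trm[OF this] show "?F k (i(k := a)) = - (?F (Suc k) i / (x k - x a))" using assms by simp
  qed simp
  also have "sum (\<lambda>i. ?F (Suc k) i / (x k - x a)) (TT n (Suc k) a) + sum (\<lambda>i. - (?F (Suc k) i / (x k - x a))) (TT n (Suc k) k) = sum (?F (Suc k)) (TT n (Suc k) a) / (x k - x a) - sum (?F (Suc k)) (TT n (Suc k) k) / (x k - x a)"
    by (simp only: sum_divide_distrib sum_negf diff_conv_add_uminus)
  finally show ?thesis unfolding WW_def diff_divide_distrib .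
qed


lemma WW_formula:
  assumes inj: "inj_on x {1..n}" and kn: "k \<le> n"
  shows "2 \<le> k \<longrightarrow> (\<forall>a. 1 \<le> a \<longrightarrow> a < k \<longrightarrow>
    WW n (d+n-1) x k a = (-1)^(n-k) * g (d+k-2) (map x (rev [k..<n+1]) @ [x a]))"
  using kn
proof (induction k rule: inc_induct)
  case base
  show ?case
  proof (intro impI allI)
    fix a assume n2: "2 \<le> n" and a: "1 \<le> a" "a < n"
    have xa: "x n \<noteq> x a" using inj_onD[OF inj, of n a] a n2 by auto
    have al0: "al n n (\<lambda>j. if j = n then a else undefined) = 0" unfolding al_def using n2 by simp
    have W: "WW n (d+n-1) x n a = 1 / (x n - x a) * (x n ^ (d+n-1) - x a ^ (d+n-1))"
      unfolding WW_def TT_base[OF a(1) less_imp_le[OF a(2)]] using al0 by simp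
    have e: "Suc (d+n-2) = d+n-1" using n2 by simp
    have G: "(x a - x n) * g (d+n-2) [x n, x a] = x a ^ (d+n-1) - x n ^ (d+n-1)"
      using g_two[of "d+n-2" "x a" "x n"] unfolding e g_single by simp
    have "g (d+n-2) [x n, x a] = (x n ^ (d+n-1) - x a ^ (d+n-1)) / (x n - x a)"
      using G xa by (simp add: field_simps)
    then show "WW n (d+n-1) x n a = (-1)^(n-n) * g (d+n-2) (map x (rev [n..<n+1]) @ [x a])"
      using W by simp
  qed
next
  case (step k)
  show ?case
  proof (intro impI allI)
    fix a assume k2: "2 \<le> k" and a: "1 \<le> a" "a < k"
    have xa: "x k \<noteq> x a" using inj_onD[OF inj, of k a] a k2 step.hyps by auto
    let ?L = "map x (rev [Suc k..<n+1])"
    have k2': "2 \<le> Suc k" using k2 by simp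
    note IH' = mp[OF step.IH k2']
    have dk: "d + Suc k - 2 = Suc (d+k-2)" using k2 by simp
    have "a < Suc k" using a by simp
    note IHa = IH'[rule_format, OF a(1) this, unfolded dk]
    have "1 \<le> k" "k < Suc k" using k2 by simp_all
    note IHk = IH'[rule_format, OF this, unfolded dk]
    have Lk: "map x (rev [k..<n+1]) = ?L @ [x k]" using step.hyps by (simp add: upt_conv_Cons)
    have "n - k = Suc (n - Suc k)" using step.hyps by simp
    hence sg: "(-1::rat)^(n-k) = (-1) * (-1)^(n - Suc k)" by simp
    have "WW n (d+n-1) x k a = (WW n (d+n-1) x (Suc k) a - WW n (d+n-1) x (Suc k) k) / (x k - x a)"
      using WW_step[OF step.hyps(2) a xa] .
    also have "\<dots> = (-1)^(n - Suc k) * ((x a - x k) * g (d+k-2) (?L @ [x k, x a])) / (x k - x a)"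
      unfolding IHa IHk right_diff_distrib[symmetric] g_end ..
    also have "\<dots> = (-1)^(n-k) * g (d+k-2) (map x (rev [k..<n+1]) @ [x a])"
      unfolding sg Lk using xa by (simp add: field_simps)
    finally show "WW n (d+n-1) x k a = (-1)^(n-k) * g (d+k-2) (map x (rev [k..<n+1]) @ [x a])" .
  qed
qed

theorem mainTheorem3:
  fixes n d :: nat and x :: "nat \<Rightarrow> rat"
  assumes "n \<ge> 2" and "d \<ge> 1" and "inj_on x {1..n}"
  shows "hsym d n x =
    (\<Sum>i \<in> tuples n. (-1) ^ (alpha n i + n) / (\<Prod>j=2..n. (x j - x (i j)))
        * (x n ^ (d+n-1) - x (i n) ^ (d+n-1)))"
proof -
  have T: "tuples n = TT n 2 1" unfolding tuples_def TT_def by simp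
  have A: "alpha n i = al n 2 i" for i unfolding alpha_def al_def by simp
  have W: "WW n (d+n-1) x 2 1 = (-1)^(n-2) * g d (map x (rev [2..<n+1]) @ [x 1])"
    using WW_formula[OF assms(3), of 2 d] assms(1) by simp
  have L: "map x (rev [1..<n+1]) = map x (rev [2..<n+1]) @ [x 1]" using assms(1)
    by (simp add: upt_conv_Cons numeral_2_eq_2)
  obtain m where m: "n = m + 2" using assms(1) by (metis le_add_diff_inverse2)
  have e: "(-1::rat)^n = (-1)^(n-2)" unfolding m by simp
  have s: "(-1::rat)^n * (-1)^(n-2) = 1" unfolding e by (simp flip: power_mult_distrib)
  have "(\<Sum>i \<in> tuples n. (-1) ^ (alpha n i + n) / (\<Prod>j=2..n. (x j - x (i j)))
        * (x n ^ (d+n-1) - x (i n) ^ (d+n-1))) = (-1)^n * WW n (d+n-1) x 2 1"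
    unfolding T A WW_def sum_distrib_left by (rule sum.cong) (auto simp: power_add)
  also have "\<dots> = g d (map x (rev [1..<n+1]))"
    unfolding W L mult.assoc[symmetric] s by simp
  also have "\<dots> = hsym d n x" using hsym_g by simp
  finally show ?thesis by simp
qed

end
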